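(* Let $\Pi$ be a transition kernel on $[0,\infty)$ satisfying the asymptotic kernel assumption with function $b$ of index $\kappa\ge0$ and limit distribution $G$. For $x>0$ and bounded measurable $f$ on $[0,\infty)$ define $\Pi_xf(u)=\int_0^\infty f(v)\,\Pi(xu,b(x)\mathrm dv)$ and $G_1f(u)=\int_0^\infty f(u^\kappa v)\,G(\mathrm dv)$. Let $f$ and $f_x$, $x>0$, be uniformly bounded continuous functions on $[0,\infty)$, and assume either (i) $f_x\to f$ uniformly on compact subsets of $[0,\infty)$ as $x\to\infty$; or (ii) $f_x\to f$ uniformly on compact subsets of $(0,\infty)$ and $G(\{0\})=0$. Then $\Pi_xf_x\to G_1f$ uniformly on compact subsets of $(0,\infty)$ as $x\to\infty$.
   Context: Asymptotic kernel assumption: there exist a function $b$, regularly varying at infinity with index $\kappa\ge0$, and a probability distribution $G$ on $[0,\infty)$ not concentrated on one point, such that $\lim_{x\to\infty}\Pi(x,b(x)A)=G(A)$ for all Borel sets $A\subset[0,\infty)$ with $G(\partial A)=0$ (here $b(x)A=\{b(x)a:a\in A\}$). *)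

theory Defs
  imports "HOL-Probability.Probability"
begin

definition nonneg_borel :: "real measure" where
  "nonneg_borel = restrict_space borel {0..}"

definition transition_kernel :: "(real \<Rightarrow> real measure) \<Rightarrow> bool" where
  "transition_kernel Pk \<longleftrightarrow>
     (\<forall>x\<ge>0. prob_space (Pk x) \<and> sets (Pk x) = sets nonneg_borel) \<and>
     (\<forall>A\<in>sets nonneg_borel. (\<lambda>x. emeasure (Pk x) A) \<in> borel_measurable nonneg_borel)"

definition regularly_varying :: "(real \<Rightarrow> real) \<Rightarrow> real \<Rightarrow> bool" where
  "regularly_varying b \<kappa> \<longleftrightarrow>
     (\<forall>x>0. b x > 0) \<and> b \<in> borel_measurable (restrict_space borel {0<..}) \<and>
     (\<forall>l>0. ((\<lambda>x. b (l * x) / b x) \<longlongrightarrow> l powr \<kappa>) at_top)"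

definition asymptotic_kernel ::
  "(real \<Rightarrow> real measure) \<Rightarrow> (real \<Rightarrow> real) \<Rightarrow> real \<Rightarrow> real measure \<Rightarrow> bool" where
  "asymptotic_kernel Pk b \<kappa> G \<longleftrightarrow>
     regularly_varying b \<kappa> \<and> \<kappa> \<ge> 0 \<and>
     prob_space G \<and> sets G = sets nonneg_borel \<and>
     \<not> (\<exists>c. measure G {c} = 1) \<and>
     (\<forall>A\<in>sets nonneg_borel.
        measure G ((subtopology euclidean {0..}) frontier_of A) = 0 \<longrightarrow>
        ((\<lambda>x. measure (Pk x) ((\<lambda>a. b x * a) ` A)) \<longlongrightarrow> measure G A) at_top)"

text \<open>\<Pk>_x f(u) = \<integral> f(v) \<Pk>(xu, b(x) dv) = \<integral> f(y / b(x)) \<Pk>(xu, dy).\<close>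
definition Pi_op :: "(real \<Rightarrow> real measure) \<Rightarrow> (real \<Rightarrow> real) \<Rightarrow> real \<Rightarrow> (real \<Rightarrow> real) \<Rightarrow> real \<Rightarrow> real" where
  "Pi_op Pk b x f u = (\<integral>y. f (y / b x) \<partial>(Pk (x * u)))"

definition G1_op :: "real measure \<Rightarrow> real \<Rightarrow> (real \<Rightarrow> real) \<Rightarrow> real \<Rightarrow> real" where
  "G1_op G \<kappa> f u = (\<integral>v. f (u powr \<kappa> * v) \<partial>G)"

end

theory Submission
  imports Defs
begin

lemma Icc_fmeas: "{a..b::real} \<in> fmeasurable lborel"
  by (simp add: fmeasurable_def emeasure_lborel_Icc_eq)

lemma uct_null:
  fixes k :: "real \<Rightarrow> real" and t :: "nat \<Rightarrow> real"
  assumes km[measurable]: "k \<in> borel_measurable borel"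
    and pt: "\<And>s. ((\<lambda>t. k (t + s) - k t) \<longlongrightarrow> 0) at_top"
    and tl: "filterlim t at_top sequentially"
    and e: "e > 0"
  shows "(\<lambda>n. measure lborel {y\<in>{0..d}. e \<le> \<bar>k (t n + y) - k (t n)\<bar>}) \<longlonglongrightarrow> 0"
proof -
  define A where "A n = {y\<in>{0..d}. e \<le> \<bar>k (t n + y) - k (t n)\<bar>}" for n
  have Am[measurable]: "A n \<in> sets borel" for n unfolding A_def by measurable
  have "(\<lambda>n. integral\<^sup>L lborel (indicator (A n) :: real \<Rightarrow> real)) \<longlonglongrightarrow> integral\<^sup>L lborel (\<lambda>x::real. 0::real)"
  proof (rule integral_dominated_convergence[where w="indicator {0..d} :: real \<Rightarrow> real" and s="\<lambda>n. indicator (A n)" and f="\<lambda>x. 0"])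
    show "integrable lborel (indicator {0..d} :: real \<Rightarrow> real)"
      by (simp add: integrable_indicator_iff emeasure_lborel_Icc_eq)
    show "AE x in lborel. (\<lambda>n. indicator (A n) x :: real) \<longlonglongrightarrow> 0"
    proof (rule AE_I2)
      fix y :: real
      have "(\<lambda>n. k (t n + y) - k (t n)) \<longlonglongrightarrow> 0"
        using filterlim_compose[OF pt[of y] tl] by simp
      then have "eventually (\<lambda>n. dist (k (t n + y) - k (t n)) 0 < e) sequentially"
        using e by (simp add: tendsto_iff)
      then have "eventually (\<lambda>n. indicator (A n) y = (0::real)) sequentially"
        by eventually_elim (auto simp: A_def indicator_def)
      then show "(\<lambda>n. indicator (A n) y :: real) \<longlonglongrightarrow> 0"
        by (rule tendsto_eventually)
    qed
    show "AE x in lborel. norm (indicator (A n) x :: real) \<le> indicator {0..d} x" for n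
      by (rule AE_I2) (auto simp: A_def indicator_def)
  qed auto
  moreover have "integral\<^sup>L lborel (indicator (A n) :: real \<Rightarrow> real) = measure lborel (A n)" for n
  proof -
    have "A n \<in> fmeasurable lborel"
      by (rule fmeasurableI2[OF Icc_fmeas[of 0 d]]) (auto simp: A_def)
    then show ?thesis by (simp add: fmeasurable_def)
  qed
  ultimately show ?thesis by (simp add: A_def)
qed

lemma uct_add:
  fixes k :: "real \<Rightarrow> real" and t s :: "nat \<Rightarrow> real"
  assumes km[measurable]: "k \<in> borel_measurable borel"
    and pt: "\<And>s. ((\<lambda>t. k (t + s) - k t) \<longlongrightarrow> 0) at_top"
    and tl: "filterlim t at_top sequentially"
    and sb: "\<And>n. 0 \<le> s n \<and> s n \<le> c" and c: "c > 0"
  shows "(\<lambda>n. k (t n + s n) - k (t n)) \<longlonglongrightarrow> 0"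
  unfolding tendsto_iff
proof (intro allI impI)
  fix \<epsilon> :: real assume \<epsilon>: "\<epsilon> > 0"
  define e where "e = \<epsilon> / 2"
  have e: "e > 0" using \<epsilon> by (simp add: e_def)
  define Y where "Y n = {y\<in>{0..2*c}. e \<le> \<bar>k (t n + y) - k (t n)\<bar>}" for n
  define Z where "Z n = {y\<in>{0..2*c}. e \<le> \<bar>k ((t n + s n) + y) - k (t n + s n)\<bar>}" for n
  have Ym[measurable]: "Y n \<in> sets borel" for n unfolding Y_def by measurable
  have Zm[measurable]: "Z n \<in> sets borel" for n unfolding Z_def by measurable
  have tl2: "filterlim (\<lambda>n. t n + s n) at_top sequentially"
    by (rule filterlim_at_top_mono[OF tl]) (use sb in auto)
  have "(\<lambda>n. measure lborel (Y n)) \<longlonglongrightarrow> 0"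
    unfolding Y_def by (rule uct_null[OF km pt tl e])
  then have ev1: "eventually (\<lambda>n. measure lborel (Y n) < c/2) sequentially"
    by (rule order_tendstoD) (use c in simp)
  have "(\<lambda>n. measure lborel (Z n)) \<longlonglongrightarrow> 0"
    unfolding Z_def by (rule uct_null[OF km pt tl2 e])
  then have ev2: "eventually (\<lambda>n. measure lborel (Z n) < c/2) sequentially"
    by (rule order_tendstoD) (use c in simp)
  show "eventually (\<lambda>n. dist (k (t n + s n) - k (t n)) 0 < \<epsilon>) sequentially"
    using ev1 ev2
  proof eventually_elim
    case (elim n)
    show ?case
    proof (rule ccontr)
      assume nc: "\<not> dist (k (t n + s n) - k (t n)) 0 < \<epsilon>"
      define P where "P = {y. - s n + y \<in> Z n}"
      have Pm[measurable]: "P \<in> sets borel" unfolding P_def by measurable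
      have mP: "measure lborel P = measure lborel (Z n)"
      proof -
        have "measure lborel (Z n) = measure (distr lborel borel ((+) (- s n))) (Z n)"
          by (simp add: lborel_distr_plus)
        also have "\<dots> = measure lborel P"
          by (subst measure_distr) (auto simp: P_def vimage_def)
        finally show ?thesis by simp
      qed
      have sub: "{c..2*c} \<subseteq> Y n \<union> P"
      proof
        fix y assume y: "y \<in> {c..2*c}"
        show "y \<in> Y n \<union> P"
        proof (rule ccontr)
          assume "y \<notin> Y n \<union> P"
          then have a: "\<bar>k (t n + y) - k (t n)\<bar> < e"
            and b: "\<bar>k ((t n + s n) + (- s n + y)) - k (t n + s n)\<bar> < e"
            using y sb[of n] c by (auto simp: Y_def P_def Z_def)
          have "(t n + s n) + (- s n + y) = t n + y" by simp
          with a b nc show False by (simp add: e_def dist_real_def abs_if split: if_splits)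
        qed
      qed
      have fm: "Y n \<union> P \<in> fmeasurable lborel"
        by (rule fmeasurableI2[OF Icc_fmeas[of 0 "3*c"]]) (use sb[of n] in \<open>auto simp: Y_def P_def Z_def\<close>)
      have "c = measure lborel {c..2*c}" using c by simp
      also have "\<dots> \<le> measure lborel (Y n \<union> P)"
        by (rule measure_mono_fmeasurable[OF sub _ fm]) simp
      also have "\<dots> \<le> measure lborel (Y n) + measure lborel P"
        by (rule measure_Un_le) auto
      also have "\<dots> < c" using elim mP by simp
      finally show False by simp
    qed
  qed
qed

lemma uct_seq:
  fixes b :: "real \<Rightarrow> real" and x u :: "nat \<Rightarrow> real"
  assumes rv: "regularly_varying b \<kappa>"
    and xpos: "\<And>n. x n > 0" and xl: "filterlim x at_top sequentially"
    and upos: "\<And>n. u n > 0" and ul: "u \<longlonglongrightarrow> u0" and u0: "u0 > 0"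
  shows "(\<lambda>n. b (x n * u n) / b (x n)) \<longlonglongrightarrow> u0 powr \<kappa>"
proof -
  have bpos: "\<And>y. y > 0 \<Longrightarrow> b y > 0"
    and bm: "b \<in> borel_measurable (restrict_space borel {0<..})"
    and blim: "\<And>l. l > 0 \<Longrightarrow> ((\<lambda>y. b (l * y) / b y) \<longlongrightarrow> l powr \<kappa>) at_top"
    using rv unfolding regularly_varying_def by auto
  define k where "k t = ln (b (exp t)) - \<kappa> * t" for t
  have expm: "exp \<in> measurable borel (restrict_space borel {0::real<..})"
    by (rule measurable_restrict_space2) auto
  have km: "k \<in> borel_measurable borel"
  proof -
    have "(\<lambda>t. b (exp t)) \<in> borel_measurable borel"
      using measurable_compose[OF expm bm] by simp
    then show ?thesis unfolding k_def by measurable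
  qed
  have pt: "((\<lambda>t. k (t + s) - k t) \<longlongrightarrow> 0) at_top" for s
  proof -
    have "((\<lambda>y. b (exp s * y) / b y) \<longlongrightarrow> exp s powr \<kappa>) at_top"
      by (rule blim) simp
    from filterlim_compose[OF this exp_at_top]
    have "((\<lambda>t. b (exp s * exp t) / b (exp t)) \<longlongrightarrow> exp s powr \<kappa>) at_top" .
    then have "((\<lambda>t. ln (b (exp s * exp t) / b (exp t)) - \<kappa> * s) \<longlongrightarrow> ln (exp s powr \<kappa>) - \<kappa> * s) at_top"
      by (intro tendsto_intros) auto
    moreover have "ln (exp s powr \<kappa>) - \<kappa> * s = 0" by (simp add: powr_def)
    moreover have "ln (b (exp s * exp t) / b (exp t)) - \<kappa> * s = k (t + s) - k t" for t
      using bpos[of "exp s * exp t"] bpos[of "exp t"]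
      by (simp add: k_def ln_div exp_add algebra_simps mult.commute)
    ultimately show ?thesis by simp
  qed
  define t where "t n = ln (x n)" for n
  define s where "s n = ln (u n)" for n
  have tl: "filterlim t at_top sequentially"
    unfolding t_def by (rule filterlim_compose[OF ln_at_top xl])
  have sl: "s \<longlonglongrightarrow> ln u0" unfolding s_def using ul u0 by (intro tendsto_intros) auto
  then have "Bseq s" by (rule convergent_imp_Bseq[OF convergentI])
  then obtain a0 where a0: "\<And>n. norm (s n) \<le> a0" by (auto simp: Bseq_def)
  define a where "a = \<bar>a0\<bar> + 1"
  have a: "a > 0" "\<And>n. \<bar>s n\<bar> \<le> a" using a0 by (auto simp: a_def) (smt (verit) a0 real_norm_def)
  define t' where "t' n = - a + t n" for n
  have tl': "filterlim t' at_top sequentially"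
    unfolding t'_def by (rule filterlim_tendsto_add_at_top[OF tendsto_const tl])
  have L1: "(\<lambda>n. k (t' n + (s n + a)) - k (t' n)) \<longlonglongrightarrow> 0"
    proof (rule uct_add[OF km pt tl', of _ "2*a"])
    fix n show "0 \<le> s n + a \<and> s n + a \<le> 2 * a" using a(2)[of n] by (simp add: abs_le_iff)
  qed (use a in simp)
  have L2: "(\<lambda>n. k (t' n + a) - k (t' n)) \<longlonglongrightarrow> 0"
    by (rule uct_add[OF km pt tl', of _ "2*a"]) (use a in auto)
  have "(\<lambda>n. (k (t' n + (s n + a)) - k (t' n)) - (k (t' n + a) - k (t' n)) + \<kappa> * s n) \<longlonglongrightarrow> 0 - 0 + \<kappa> * ln u0"
    by (intro tendsto_intros L1 L2 sl)
  then have "(\<lambda>n. exp ((k (t' n + (s n + a)) - k (t' n)) - (k (t' n + a) - k (t' n)) + \<kappa> * s n)) \<longlonglongrightarrow> exp (0 - 0 + \<kappa> * ln u0)"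
    by (rule tendsto_exp)
  moreover have "exp (0 - 0 + \<kappa> * ln u0) = u0 powr \<kappa>" using u0 by (simp add: powr_def)
  moreover have "exp ((k (t' n + (s n + a)) - k (t' n)) - (k (t' n + a) - k (t' n)) + \<kappa> * s n) = b (x n * u n) / b (x n)" for n
  proof -
    have e1: "t' n + (s n + a) = t n + s n" "t' n + a = t n" by (simp_all add: t'_def)
    have ex: "exp (t n + s n) = x n * u n" "exp (t n) = x n"
      using xpos[of n] upos[of n] by (simp_all add: t_def s_def exp_add)
    have bp: "b (x n * u n) > 0" "b (x n) > 0" using xpos[of n] upos[of n] bpos by auto
    have "exp ((k (t' n + (s n + a)) - k (t' n)) - (k (t' n + a) - k (t' n)) + \<kappa> * s n)
        = exp (k (t n + s n) - k (t n) + \<kappa> * s n)" by (simp add: e1)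
    also have "k (t n + s n) - k (t n) + \<kappa> * s n = ln (b (x n * u n)) - ln (b (x n))"
      unfolding k_def ex by (simp add: algebra_simps)
    also have "exp (ln (b (x n * u n)) - ln (b (x n))) = b (x n * u n) / b (x n)"
      using bp by (simp add: exp_diff)
    finally show ?thesis .
  qed
  ultimately show ?thesis by simp
qed

lemma space_nb: "space nonneg_borel = {0..}"
  by (simp add: nonneg_borel_def space_restrict_space)

lemma space_nb2: "sets N = sets nonneg_borel \<Longrightarrow> space N = {0..}"
  by (metis sets_eq_imp_space_eq space_nb)

lemma meas_nb: "sets N = sets nonneg_borel \<Longrightarrow> continuous_on {0..} g \<Longrightarrow> g \<in> borel_measurable N"
  by (subst measurable_cong_sets[of N nonneg_borel borel borel])
     (auto simp: nonneg_borel_def intro: borel_measurable_continuous_on_restrict)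

lemma meas_nb2: "sets N = sets nonneg_borel \<Longrightarrow> g \<in> borel_measurable borel \<Longrightarrow> g \<in> borel_measurable N"
  by (subst measurable_cong_sets[of N nonneg_borel borel borel])
     (auto simp: nonneg_borel_def intro: measurable_restrict_space1)

lemma frontier_Icc0:
  fixes x :: real
  shows "(subtopology euclidean {0..}) frontier_of {0..x} \<subseteq> {x}"
proof -
  let ?X = "subtopology euclidean {0::real..}"
  have "closedin ?X {0..x}"
    unfolding closedin_subtopology by (rule exI[of _ "{..x}"]) auto
  then have c: "?X closure_of {0..x} = {0..x}" by (simp add: closure_of_eq)
  have "openin ?X {0..<x}"
    unfolding openin_subtopology by (rule exI[of _ "{..<x}"]) auto
  then have i: "{0..<x} \<subseteq> ?X interior_of {0..x}"
    by (rule interior_of_maximal[rotated]) auto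
  show ?thesis unfolding frontier_of_def c using i by (force simp: subset_iff)
qed

lemma img_eq:
  fixes \<beta> x :: real
  assumes "\<beta> > 0"
  shows "(\<lambda>z. z / \<beta>) -` {..x} \<inter> {0..} = (\<lambda>a. \<beta> * a) ` {0..x}"
proof (intro equalityI subsetI)
  fix z assume z: "z \<in> (\<lambda>z. z / \<beta>) -` {..x} \<inter> {0..}"
  show "z \<in> (\<lambda>a. \<beta> * a) ` {0..x}"
    by (rule image_eqI[where x="z/\<beta>"]) (use z assms in auto)
next
  fix z assume "z \<in> (\<lambda>a. \<beta> * a) ` {0..x}"
  then show "z \<in> (\<lambda>z. z / \<beta>) -` {..x} \<inter> {0..}" using assms by (auto simp: field_simps)
qed

lemma conv_point:
  fixes fx :: "real \<Rightarrow> real \<Rightarrow> real" and X z :: "nat \<Rightarrow> real"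
  assumes cont_f: "continuous_on {0..} f"
    and uc: "uniform_limit ({a..c} \<inter> {0..}) fx f at_top"
    and w: "a < w" "w < c" "w \<ge> 0"
    and Xl: "filterlim X at_top sequentially"
    and zl: "z \<longlonglongrightarrow> w" and zpos: "\<And>n. z n \<ge> 0"
  shows "(\<lambda>n. fx (X n) (z n)) \<longlonglongrightarrow> f w"
proof (rule Lim_transform)
  show "(\<lambda>n. f (z n)) \<longlonglongrightarrow> f w"
    by (rule continuous_on_tendsto_compose[OF cont_f zl]) (use w zpos in auto)
  show "(\<lambda>n. fx (X n) (z n) - f (z n)) \<longlonglongrightarrow> 0"
    unfolding tendsto_iff
  proof (intro allI impI)
    fix e :: real assume e: "e > 0"
    have "eventually (\<lambda>x. \<forall>u\<in>{a..c} \<inter> {0..}. dist (fx x u) (f u) < e) at_top"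
      using uc e unfolding uniform_limit_iff by blast
    from eventually_compose_filterlim[OF this Xl]
    have E1: "eventually (\<lambda>n. \<forall>u\<in>{a..c} \<inter> {0..}. dist (fx (X n) u) (f u) < e) sequentially" .
    have E2: "eventually (\<lambda>n. z n \<in> {a<..<c}) sequentially"
      by (rule topological_tendstoD[OF zl]) (use w in auto)
    show "eventually (\<lambda>n. dist (fx (X n) (z n) - f (z n)) 0 < e) sequentially"
      using E1 E2 by eventually_elim (use zpos in \<open>auto simp: dist_real_def\<close>)
  qed
qed

lemma main_seq:
  fixes Pk :: "real \<Rightarrow> real measure" and b :: "real \<Rightarrow> real" and \<kappa> :: real
    and G :: "real measure" and f :: "real \<Rightarrow> real" and fx :: "real \<Rightarrow> real \<Rightarrow> real"
    and X U :: "nat \<Rightarrow> real" and D :: "real set"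
  assumes kern: "\<And>z. z \<ge> 0 \<Longrightarrow> prob_space (Pk z) \<and> sets (Pk z) = sets nonneg_borel"
    and rv: "regularly_varying b \<kappa>"
    and pG: "prob_space G" and sG: "sets G = sets nonneg_borel"
    and lim: "\<And>A. A \<in> sets nonneg_borel \<Longrightarrow>
        measure G ((subtopology euclidean {0..}) frontier_of A) = 0 \<Longrightarrow>
        ((\<lambda>x. measure (Pk x) ((\<lambda>a. b x * a) ` A)) \<longlongrightarrow> measure G A) at_top"
    and cont_f: "continuous_on {0..} f"
    and cont_fx: "\<And>x. x > 0 \<Longrightarrow> continuous_on {0..} (fx x)"
    and bnd: "\<And>x u. x > 0 \<Longrightarrow> u \<ge> 0 \<Longrightarrow> \<bar>fx x u\<bar> \<le> M"
    and bndf: "\<And>u. u \<ge> 0 \<Longrightarrow> \<bar>f u\<bar> \<le> M"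
    and Dsub: "D \<subseteq> {0..}" and Dm: "D \<in> sets borel"
    and Duc: "\<And>w. w \<in> D \<Longrightarrow> \<exists>a c. a < w \<and> w < c \<and> uniform_limit ({a..c} \<inter> {0..}) fx f at_top"
    and Dsc: "\<And>\<rho> w. \<rho> > 0 \<Longrightarrow> w \<in> D \<Longrightarrow> \<rho> * w \<in> D"
    and DG: "AE v in G. v \<in> D"
    and Xpos: "\<And>n. X n > 0" and Xl: "filterlim X at_top sequentially"
    and Upos: "\<And>n. U n > 0" and Ul: "U \<longlonglongrightarrow> l" and l: "l > 0"
  shows "(\<lambda>n. Pi_op Pk b (X n) (fx (X n)) (U n)) \<longlonglongrightarrow> G1_op G \<kappa> f l"
proof -
  have bpos: "\<And>y. y > 0 \<Longrightarrow> b y > 0" using rv unfolding regularly_varying_def by auto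
  define y where "y n = X n * U n" for n
  have ypos: "y n > 0" for n using Xpos[of n] Upos[of n] by (simp add: y_def)
  have yl: "filterlim y at_top sequentially"
  proof -
    have "y = (\<lambda>n. U n * X n)" by (auto simp: y_def fun_eq_iff)
    then show ?thesis using filterlim_tendsto_pos_mult_at_top[OF Ul l Xl] by simp
  qed
  define \<beta> where "\<beta> n = b (y n)" for n
  have \<beta>pos: "\<beta> n > 0" for n using bpos[OF ypos[of n]] by (simp add: \<beta>_def)
  define r where "r n = \<beta> n / b (X n)" for n
  define \<rho> where "\<rho> = l powr \<kappa>"
  have \<rho>pos: "\<rho> > 0" using l by (simp add: \<rho>_def)
  have rpos: "r n > 0" for n using \<beta>pos[of n] bpos[OF Xpos[of n]] by (simp add: r_def)
  have rl: "r \<longlonglongrightarrow> \<rho>"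
  proof -
    have "r = (\<lambda>n. b (X n * U n) / b (X n))" by (auto simp: fun_eq_iff r_def \<beta>_def y_def)
    then show ?thesis using uct_seq[OF rv Xpos Xl Upos Ul l] by (simp add: \<rho>_def)
  qed
  have kp: "prob_space (Pk (y n))" and ks: "sets (Pk (y n)) = sets nonneg_borel" for n
    using kern[of "y n"] ypos[of n] by auto
  define \<nu> where "\<nu> n = distr (Pk (y n)) borel (\<lambda>z. z / \<beta> n)" for n
  have m\<nu>: "(\<lambda>z. z / \<beta> n) \<in> borel_measurable (Pk (y n))" for n
    by (rule meas_nb2[OF ks]) simp
  define G' where "G' = distr G borel (\<lambda>v. v)"
  have mid: "(\<lambda>v. v) \<in> borel_measurable G" by (rule meas_nb2[OF sG]) simp
  have rd\<nu>: "real_distribution (\<nu> n)" for n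
  proof -
    have "prob_space (\<nu> n)" unfolding \<nu>_def by (rule prob_space.prob_space_distr[OF kp m\<nu>])
    then show ?thesis by (simp add: real_distribution_def real_distribution_axioms_def \<nu>_def)
  qed
  have rdG': "real_distribution G'"
  proof -
    have "prob_space G'" unfolding G'_def by (rule prob_space.prob_space_distr[OF pG mid])
    then show ?thesis by (simp add: real_distribution_def real_distribution_axioms_def G'_def)
  qed
  have spG: "space G = {0..}" by (rule space_nb2[OF sG])
  have spK: "space (Pk (y n)) = {0..}" for n by (rule space_nb2[OF ks])
  have wc: "weak_conv_m \<nu> G'"
    unfolding weak_conv_m_def weak_conv_def
  proof (intro allI impI)
    fix x assume ic: "isCont (cdf G') x"
    have "measure G' {x} = 0"
      using finite_borel_measure.isCont_cdf[OF real_distribution.finite_borel_measure_M[OF rdG']] ic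
      by simp
    then have Gx: "measure G ({x} \<inter> {0..}) = 0"
      by (simp add: G'_def measure_distr[OF mid] spG)
    have c1: "cdf (\<nu> n) x = measure (Pk (y n)) ((\<lambda>a. \<beta> n * a) ` {0..x})" for n
      by (simp add: cdf_def2 \<nu>_def measure_distr[OF m\<nu>] spK img_eq[OF \<beta>pos])
    have c2: "cdf G' x = measure G ({..x} \<inter> {0..})"
      by (simp add: cdf_def2 G'_def measure_distr[OF mid] spG)
    show "(\<lambda>n. cdf (\<nu> n) x) \<longlonglongrightarrow> cdf G' x"
    proof (cases "x < 0")
      case True
      then have "{0..x} = {}" "{..x} \<inter> {0..} = {}" by auto
      then show ?thesis by (simp add: c1 c2)
    next
      case False
      then have e: "{..x} \<inter> {0..} = {0..x}" "{x} \<inter> {0..} = {x}" by auto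
      have As: "{0..x} \<in> sets nonneg_borel"
        by (simp add: nonneg_borel_def sets_restrict_space_iff)
      have Fr: "(subtopology euclidean {0..}) frontier_of {0..x} \<subseteq> {x}" by (rule frontier_Icc0)
      have "measure G ((subtopology euclidean {0..}) frontier_of {0..x}) = 0"
      proof (cases "(subtopology euclidean {0..}) frontier_of {0..x} = {}")
        case True then show ?thesis by simp
      next
        case False
        with Fr have "(subtopology euclidean {0..}) frontier_of {0..x} = {x}" by blast
        then show ?thesis using Gx e by simp
      qed
      from filterlim_compose[OF lim[OF As this] yl]
      show ?thesis by (simp add: c1 c2 e \<beta>_def)
    qed
  qed
  obtain \<Omega> :: "real measure" and Ys :: "nat \<Rightarrow> real \<Rightarrow> real" and Y :: "real \<Rightarrow> real" where p\<Omega>: "prob_space \<Omega>" and Ysm: "\<And>n. Ys n \<in> borel_measurable \<Omega>"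
    and dYs: "\<And>n. distr \<Omega> borel (Ys n) = \<nu> n" and Yml: "Y \<in> \<Omega> \<rightarrow>\<^sub>M lborel"
    and dY: "distr \<Omega> borel Y = G'" and YsY: "\<And>\<omega>. \<omega> \<in> space \<Omega> \<Longrightarrow> (\<lambda>n. Ys n \<omega>) \<longlonglongrightarrow> Y \<omega>"
    using Skorohod[OF rd\<nu> rdG' wc] by blast
  interpret \<Omega>: prob_space \<Omega> by (rule p\<Omega>)
  have Ym: "Y \<in> borel_measurable \<Omega>" using Yml by (simp add: measurable_lborel1)
  define h where "h n v = fx (X n) (r n * max v 0)" for n v
  define hh where "hh v = f (\<rho> * max v 0)" for v
  have hm: "h n \<in> borel_measurable borel" for n
  proof -
    have "continuous_on UNIV (\<lambda>v. fx (X n) (r n * max v 0))"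
      by (rule continuous_on_compose2[OF cont_fx[OF Xpos[of n]]])
         (use rpos[of n] in \<open>auto intro!: continuous_intros\<close>)
    then show ?thesis unfolding h_def by (rule borel_measurable_continuous_onI)
  qed
  have hhm: "hh \<in> borel_measurable borel"
  proof -
    have "continuous_on UNIV (\<lambda>v. f (\<rho> * max v 0))"
      by (rule continuous_on_compose2[OF cont_f])
         (use \<rho>pos in \<open>auto intro!: continuous_intros\<close>)
    then show ?thesis unfolding hh_def by (rule borel_measurable_continuous_onI)
  qed
  have eq1: "Pi_op Pk b (X n) (fx (X n)) (U n) = (\<integral>\<omega>. h n (Ys n \<omega>) \<partial>\<Omega>)" for n
  proof -
    have "Pi_op Pk b (X n) (fx (X n)) (U n) = (\<integral>z. h n (z / \<beta> n) \<partial>Pk (y n))"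
      unfolding Pi_op_def y_def[symmetric]
    proof (rule Bochner_Integration.integral_cong[OF refl])
      fix z assume "z \<in> space (Pk (y n))"
      then have z: "z \<ge> 0" by (simp add: spK)
      have "r n * max (z / \<beta> n) 0 = z / b (X n)"
        using z \<beta>pos[of n] by (simp add: r_def)
      then show "fx (X n) (z / b (X n)) = h n (z / \<beta> n)" by (simp add: h_def)
    qed
    also have "\<dots> = integral\<^sup>L (\<nu> n) (h n)"
      unfolding \<nu>_def by (rule integral_distr[OF m\<nu> hm, symmetric])
    also have "\<dots> = (\<integral>\<omega>. h n (Ys n \<omega>) \<partial>\<Omega>)"
      unfolding dYs[symmetric] by (rule integral_distr[OF Ysm hm])
    finally show ?thesis .
  qed
  have eq2: "G1_op G \<kappa> f l = (\<integral>\<omega>. hh (Y \<omega>) \<partial>\<Omega>)"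
  proof -
    have "G1_op G \<kappa> f l = (\<integral>v. hh v \<partial>G)"
      unfolding G1_op_def
    proof (rule Bochner_Integration.integral_cong[OF refl])
      fix v assume "v \<in> space G"
      then have "v \<ge> 0" by (simp add: spG)
      then show "f (l powr \<kappa> * v) = hh v" by (simp add: hh_def \<rho>_def)
    qed
    also have "\<dots> = integral\<^sup>L G' hh"
      unfolding G'_def by (rule integral_distr[OF mid hhm, symmetric])
    also have "\<dots> = (\<integral>\<omega>. hh (Y \<omega>) \<partial>\<Omega>)"
      unfolding dY[symmetric] by (rule integral_distr[OF Ym hhm])
    finally show ?thesis .
  qed
  have AED: "AE \<omega> in \<Omega>. Y \<omega> \<in> D"
  proof -
    have "AE v in G'. v \<in> D"
      unfolding G'_def using DG by (subst AE_distr_iff[OF mid]) (auto simp: Dm)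
    then have "AE v in distr \<Omega> borel Y. v \<in> D" unfolding dY .
    then show ?thesis by (rule AE_distrD[OF Ym])
  qed
  have "(\<lambda>n. \<integral>\<omega>. h n (Ys n \<omega>) \<partial>\<Omega>) \<longlonglongrightarrow> (\<integral>\<omega>. hh (Y \<omega>) \<partial>\<Omega>)"
  proof (rule integral_dominated_convergence[where w="\<lambda>_. M"])
    show "(\<lambda>\<omega>. hh (Y \<omega>)) \<in> borel_measurable \<Omega>"
      using measurable_compose[OF Ym hhm] by simp
    show "(\<lambda>\<omega>. h n (Ys n \<omega>)) \<in> borel_measurable \<Omega>" for n
      using measurable_compose[OF Ysm hm] by simp
    show "integrable \<Omega> (\<lambda>_. M)" by simp
    show "AE \<omega> in \<Omega>. norm (h n (Ys n \<omega>)) \<le> M" for n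
      by (rule AE_I2) (use rpos[of n] in \<open>auto simp: h_def intro!: bnd Xpos\<close>)
    show "AE \<omega> in \<Omega>. (\<lambda>n. h n (Ys n \<omega>)) \<longlonglongrightarrow> hh (Y \<omega>)"
      using AED AE_space
    proof eventually_elim
      case (elim \<omega>)
      have Y0: "Y \<omega> \<ge> 0" using elim Dsub by auto
      have wD: "\<rho> * Y \<omega> \<in> D" by (rule Dsc[OF \<rho>pos elim(1)])
      then obtain a c where ac: "a < \<rho> * Y \<omega>" "\<rho> * Y \<omega> < c"
        and uc: "uniform_limit ({a..c} \<inter> {0..}) fx f at_top" using Duc by blast
      have zl: "(\<lambda>n. r n * max (Ys n \<omega>) 0) \<longlonglongrightarrow> \<rho> * max (Y \<omega>) 0"
        by (intro tendsto_intros rl YsY elim(2))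
      have "(\<lambda>n. fx (X n) (r n * max (Ys n \<omega>) 0)) \<longlonglongrightarrow> f (\<rho> * Y \<omega>)"
      proof (rule conv_point[OF cont_f uc ac _ Xl])
        show "0 \<le> \<rho> * Y \<omega>" using Y0 \<rho>pos by simp
        show "(\<lambda>n. r n * max (Ys n \<omega>) 0) \<longlonglongrightarrow> \<rho> * Y \<omega>" using zl Y0 by simp
        show "0 \<le> r n * max (Ys n \<omega>) 0" for n
          using rpos[of n] by (intro mult_nonneg_nonneg) auto
      qed
      then show ?case using Y0 by (simp add: h_def hh_def)
    qed
  qed
  then show ?thesis by (simp add: eq1 eq2)
qed

lemma G1_cont:
  fixes G :: "real measure" and f :: "real \<Rightarrow> real" and U :: "nat \<Rightarrow> real"
  assumes pG: "prob_space G" and sG: "sets G = sets nonneg_borel"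
    and cont_f: "continuous_on {0..} f"
    and bndf: "\<And>u. u \<ge> 0 \<Longrightarrow> \<bar>f u\<bar> \<le> M"
    and Upos: "\<And>n. U n > 0" and Ul: "U \<longlonglongrightarrow> l" and l: "l > 0"
  shows "(\<lambda>n. G1_op G \<kappa> f (U n)) \<longlonglongrightarrow> G1_op G \<kappa> f l"
proof -
  interpret G: prob_space G by (rule pG)
  have spG: "space G = {0..}" by (rule space_nb2[OF sG])
  have mc: "(\<lambda>v. f (c * v)) \<in> borel_measurable G" if "c \<ge> 0" for c
  proof (rule meas_nb[OF sG])
    show "continuous_on {0..} (\<lambda>v. f (c * v))"
      by (rule continuous_on_compose2[OF cont_f]) (use that in \<open>auto intro!: continuous_intros\<close>)
  qed
  show ?thesis
    unfolding G1_op_def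
  proof (rule integral_dominated_convergence[where w="\<lambda>_. M"])
    show "(\<lambda>v. f (l powr \<kappa> * v)) \<in> borel_measurable G" by (rule mc) simp
    show "(\<lambda>v. f (U n powr \<kappa> * v)) \<in> borel_measurable G" for n by (rule mc) simp
    show "integrable G (\<lambda>_. M)" by simp
    show "AE v in G. norm (f (U n powr \<kappa> * v)) \<le> M" for n
      by (rule AE_I2) (auto simp: spG intro!: bndf)
    show "AE v in G. (\<lambda>n. f (U n powr \<kappa> * v)) \<longlonglongrightarrow> f (l powr \<kappa> * v)"
    proof (rule AE_I2)
      fix v assume "v \<in> space G"
      then have v: "v \<ge> 0" by (simp add: spG)
      have "(\<lambda>n. U n powr \<kappa> * v) \<longlonglongrightarrow> l powr \<kappa> * v"
        using Ul l by (intro tendsto_intros) auto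
      then show "(\<lambda>n. f (U n powr \<kappa> * v)) \<longlonglongrightarrow> f (l powr \<kappa> * v)"
        by (rule continuous_on_tendsto_compose[OF cont_f]) (use v in auto)
    qed
  qed
qed

theorem lemma6:
  fixes Pk :: "real \<Rightarrow> real measure" and b :: "real \<Rightarrow> real" and \<kappa> :: real
    and G :: "real measure" and f :: "real \<Rightarrow> real" and fx :: "real \<Rightarrow> real \<Rightarrow> real"
  assumes kernel: "transition_kernel Pk"
    and asym: "asymptotic_kernel Pk b \<kappa> G"
    and cont_f: "continuous_on {0..} f"
    and cont_fx: "\<And>x. x > 0 \<Longrightarrow> continuous_on {0..} (fx x)"
    and bdd: "\<exists>M. \<forall>x>0. \<forall>u\<ge>0. \<bar>fx x u\<bar> \<le> M \<and> \<bar>f u\<bar> \<le> M"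
    and conv: "(\<forall>K. compact K \<and> K \<subseteq> {0..} \<longrightarrow> uniform_limit K fx f at_top)
             \<or> ((\<forall>K. compact K \<and> K \<subseteq> {0<..} \<longrightarrow> uniform_limit K fx f at_top)
                \<and> measure G {0} = 0)"
  shows "\<forall>K. compact K \<and> K \<subseteq> {0<..} \<longrightarrow>
           uniform_limit K (\<lambda>x u. Pi_op Pk b x (fx x) u) (G1_op G \<kappa> f) at_top"
proof -
  obtain M where M: "\<And>x u. x > 0 \<Longrightarrow> u \<ge> 0 \<Longrightarrow> \<bar>fx x u\<bar> \<le> M \<and> \<bar>f u\<bar> \<le> M"
    using bdd by blast
  have bnd: "\<And>x u. x > 0 \<Longrightarrow> u \<ge> 0 \<Longrightarrow> \<bar>fx x u\<bar> \<le> M" using M by blast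
  have bndf: "\<And>u. u \<ge> 0 \<Longrightarrow> \<bar>f u\<bar> \<le> M" using M[of 1] by auto
  have kern: "\<And>z. z \<ge> 0 \<Longrightarrow> prob_space (Pk z) \<and> sets (Pk z) = sets nonneg_borel"
    using kernel unfolding transition_kernel_def by blast
  have rv: "regularly_varying b \<kappa>" and pG: "prob_space G" and sG: "sets G = sets nonneg_borel"
    and lim: "\<And>A. A \<in> sets nonneg_borel \<Longrightarrow>
        measure G ((subtopology euclidean {0..}) frontier_of A) = 0 \<Longrightarrow>
        ((\<lambda>x. measure (Pk x) ((\<lambda>a. b x * a) ` A)) \<longlongrightarrow> measure G A) at_top"
    using asym unfolding asymptotic_kernel_def by blast+
  have spG: "space G = {0..}" by (rule space_nb2[OF sG])
  have key: "(\<lambda>n. Pi_op Pk b (X n) (fx (X n)) (U n)) \<longlonglongrightarrow> G1_op G \<kappa> f l"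
    if Xpos: "\<And>n. X n > 0" and Xl: "filterlim X at_top sequentially"
      and Upos: "\<And>n. U n > 0" and Ul: "U \<longlonglongrightarrow> l" and l: "l > 0" for X U l
  proof (cases "\<forall>K. compact K \<and> K \<subseteq> {0..} \<longrightarrow> uniform_limit K fx f at_top")
    case True
    show ?thesis
    proof (rule main_seq[OF kern rv pG sG lim cont_f cont_fx bnd bndf, where D="{0..}"])
      show "\<exists>a c. a < w \<and> w < c \<and> uniform_limit ({a..c} \<inter> {0..}) fx f at_top" if "w \<in> {0..}" for w
      proof (intro exI conjI)
        show "-1 < w" "w < w + 1" using that by auto
        show "uniform_limit ({-1..w+1} \<inter> {0..}) fx f at_top"
          using True compact_Int_closed[OF compact_Icc[of "-1" "w+1"] closed_atLeast[of 0]] by auto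
      qed
      show "AE v in G. v \<in> {0..}" by (rule AE_I2) (simp add: spG)
    qed (use Xpos Xl Upos Ul l in \<open>auto intro: mult_nonneg_nonneg\<close>)
  next
    case False
    with conv have uc: "\<forall>K. compact K \<and> K \<subseteq> {0<..} \<longrightarrow> uniform_limit K fx f at_top"
      and G0: "measure G {0} = 0" by auto
    show ?thesis
    proof (rule main_seq[OF kern rv pG sG lim cont_f cont_fx bnd bndf, where D="{0<..}"])
      show "\<exists>a c. a < w \<and> w < c \<and> uniform_limit ({a..c} \<inter> {0..}) fx f at_top" if "w \<in> {0<..}" for w
      proof (intro exI conjI)
        show "w/2 < w" "w < w + 1" using that by auto
        have "compact ({w/2..w+1} \<inter> {0..})"
          using compact_Int_closed[OF compact_Icc[of "w/2" "w+1"] closed_atLeast[of 0]] .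
        moreover have "{w/2..w+1} \<inter> {0..} \<subseteq> {0<..}" using that by auto
        ultimately show "uniform_limit ({w/2..w+1} \<inter> {0..}) fx f at_top"
          using uc by blast
      qed
      have s0: "{0} \<in> sets G" by (simp add: sG nonneg_borel_def sets_restrict_space_iff)
      interpret G: prob_space G by (rule pG)
      have "emeasure G {0} = 0" using G.emeasure_eq_measure[of "{0}"] G0 by simp
      then have "{0} \<in> null_sets G" using s0 by (rule null_setsI)
      from AE_not_in[OF this]
      show "AE v in G. v \<in> {0<..}"
        by (rule AE_mp) (rule AE_I2, auto simp: spG)
    qed (use Xpos Xl Upos Ul l in \<open>auto intro: mult_pos_pos\<close>)
  qed
  show ?thesis
  proof (intro allI impI)
    fix K :: "real set" assume K: "compact K \<and> K \<subseteq> {0<..}"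
    show "uniform_limit K (\<lambda>x u. Pi_op Pk b x (fx x) u) (G1_op G \<kappa> f) at_top"
      unfolding uniform_limit_iff
    proof (intro allI impI)
      fix e :: real assume e: "e > 0"
      show "\<forall>\<^sub>F x in at_top. \<forall>u\<in>K. dist (Pi_op Pk b x (fx x) u) (G1_op G \<kappa> f u) < e"
      proof (rule ccontr)
        assume "\<not> ?thesis"
        then have "\<forall>N. \<exists>x\<ge>N. \<exists>u\<in>K. \<not> dist (Pi_op Pk b x (fx x) u) (G1_op G \<kappa> f u) < e"
          unfolding eventually_at_top_linorder by blast
        then have "\<forall>n::nat. \<exists>x u. x \<ge> real n + 1 \<and> u \<in> K \<and> \<not> dist (Pi_op Pk b x (fx x) u) (G1_op G \<kappa> f u) < e"
          by blast
        then obtain X Uu where XU: "\<And>n. X n \<ge> real n + 1" "\<And>n. Uu n \<in> K"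
          "\<And>n. \<not> dist (Pi_op Pk b (X n) (fx (X n)) (Uu n)) (G1_op G \<kappa> f (Uu n)) < e"
          by metis
        obtain l r where lK: "l \<in> K" and r: "strict_mono r" and Ur: "(Uu \<circ> r) \<longlonglongrightarrow> l"
          using seq_compactE[OF compact_imp_seq_compact] K XU(2) by metis
        have l: "l > 0" using lK K by auto
        have Xpos: "X (r n) > 0" for n using XU(1)[of "r n"] by (smt (verit) of_nat_0_le_iff)
        have Upos: "Uu (r n) > 0" for n using XU(2)[of "r n"] K by auto
        have Xl: "filterlim (\<lambda>n. X (r n)) at_top sequentially"
        proof (rule filterlim_at_top_mono[OF filterlim_real_sequentially])
          show "\<forall>\<^sub>F n in sequentially. real n \<le> X (r n)"
          proof (rule always_eventually, rule allI)
            fix n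
            have "real n \<le> real (r n)" using seq_suble[OF r, of n] by simp
            then show "real n \<le> X (r n)" using XU(1)[of "r n"] by linarith
          qed
        qed
        have Ul: "(\<lambda>n. Uu (r n)) \<longlonglongrightarrow> l" using Ur by (simp add: comp_def)
        have L1: "(\<lambda>n. Pi_op Pk b (X (r n)) (fx (X (r n))) (Uu (r n))) \<longlonglongrightarrow> G1_op G \<kappa> f l"
          by (rule key[OF Xpos Xl Upos Ul l])
        have L2: "(\<lambda>n. G1_op G \<kappa> f (Uu (r n))) \<longlonglongrightarrow> G1_op G \<kappa> f l"
          by (rule G1_cont[OF pG sG cont_f bndf Upos Ul l])
        have "(\<lambda>n. dist (Pi_op Pk b (X (r n)) (fx (X (r n))) (Uu (r n))) (G1_op G \<kappa> f (Uu (r n))))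
              \<longlonglongrightarrow> dist (G1_op G \<kappa> f l) (G1_op G \<kappa> f l)"
          by (rule tendsto_dist[OF L1 L2])
        then have "eventually (\<lambda>n. dist (Pi_op Pk b (X (r n)) (fx (X (r n))) (Uu (r n))) (G1_op G \<kappa> f (Uu (r n))) < e) sequentially"
          using e by (auto dest: order_tendstoD(2))
        then obtain N where "dist (Pi_op Pk b (X (r N)) (fx (X (r N))) (Uu (r N))) (G1_op G \<kappa> f (Uu (r N))) < e"
          unfolding eventually_sequentially by blast
        with XU(3)[of "r N"] show False by simp
      qed
    qed
  qed
qed

end
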